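(* Let $d$ be a prime and $\omega=e^{2\pi i/d}$. For each $l\in\{0,1,\dots,d-1\}$ (identified with $\mathbb{Z}_d$) choose $\theta(l)\in U(1)$ with $\theta(l)^d=\omega^l$ (for instance $\theta(l)=e^{2\pi i l/d^2}$), and define the unitary $M(l)$ on $\mathbb{C}^d$ by $M(l)|q\rangle=\theta(l)\,\omega^{l q^{d-1}}|q+1\rangle$ for $q\in\{0,\dots,d-1\}$ (addition in $q+1$ modulo $d$). Let $|\psi\rangle=\frac{1}{\sqrt d}\sum_{q=0}^{d-1}|q\rangle\otimes|q\rangle\otimes|q\rangle$. For an input $\mathbf{i}=(i_1,i_2)\in\mathbb{Z}_d^2$ set $l_1(\mathbf{i})=i_1$, $l_2(\mathbf{i})=i_2$, $l_3(\mathbf{i})=-i_1-i_2$ (in $\mathbb{Z}_d$), and consider the deterministic, non-adaptive measurement-based computation with $\mathbb{Z}_d$-linear side-processing in which, on input $\mathbf{i}$, the operator $M(l_1(\mathbf{i}))\otimes M(l_2(\mathbf{i}))\otimes M(l_3(\mathbf{i}))$ is measured on $|\psi\rangle$, with output $o(\mathbf{i})\in\mathbb{Z}_d$ determined by $M(l_1(\mathbf{i}))\otimes M(l_2(\mathbf{i}))\otimes M(l_3(\mathbf{i}))|\psi\rangle=\omega^{o(\mathbf{i})}|\psi\rangle$. Then this computation is contextual: there exist no functions $m_1,m_2,m_3:\mathbb{Z}_d\to\mathbb{Z}_d$ such that $o(\mathbf{i})=m_1(l_1(\mathbf{i}))+m_2(l_2(\mathbf{i}))+m_3(l_3(\mathbf{i}))\bmod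 d$ for all $\mathbf{i}\in\mathbb{Z}_d^2$.
   Context: The state $|\psi\rangle$ is a common eigenvector of all the operators $M(l_1(\mathbf{i}))\otimes M(l_2(\mathbf{i}))\otimes M(l_3(\mathbf{i}))$, with eigenvalues that are $d$-th roots of unity, so $o:\mathbb{Z}_d^2\to\mathbb{Z}_d$ is well defined and the computation is deterministic. A (deterministic) noncontextual hidden variable model for the computation is an assignment of outcomes $m_k(l)\in\mathbb{Z}_d$ to each local measurement $M(l)$ on qudit $k$, independent of the input, such that the output equals the sum modulo $d$ of the local outcomes of the measurements performed; the computation is called contextual if no such model exists. *)

theory Defs
  imports Complex_Main "HOL-Computational_Algebra.Primes"
begin

text \<open>Operators on C^d are
  represented by their matrix entries  A a x = <a|A|x>  (indices < d); vectors on
  (C^d)^{\<otimes>3} by their coefficient functions.\<close>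

definition omega :: "nat \<Rightarrow> complex" where
  "omega d = exp (2 * pi * \<i> / of_nat d)"

definition Mop :: "nat \<Rightarrow> (nat \<Rightarrow> complex) \<Rightarrow> nat \<Rightarrow> nat \<Rightarrow> nat \<Rightarrow> complex" where
  "Mop d \<theta> l a x = (if a = (x + 1) mod d then \<theta> l * omega d ^ (l * x ^ (d - 1)) else 0)"

definition psi :: "nat \<Rightarrow> nat \<Rightarrow> nat \<Rightarrow> nat \<Rightarrow> complex" where
  "psi d x y z = (if x = y \<and> y = z then complex_of_real (1 / sqrt (real d)) else 0)"

definition tensor3_apply ::
  "nat \<Rightarrow> (nat \<Rightarrow> nat \<Rightarrow> complex) \<Rightarrow> (nat \<Rightarrow> nat \<Rightarrow> complex) \<Rightarrow> (nat \<Rightarrow> nat \<Rightarrow> complex)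
   \<Rightarrow> (nat \<Rightarrow> nat \<Rightarrow> nat \<Rightarrow> complex) \<Rightarrow> nat \<Rightarrow> nat \<Rightarrow> nat \<Rightarrow> complex" where
  "tensor3_apply d A B C v a b c =
     (\<Sum>x<d. \<Sum>y<d. \<Sum>z<d. A a x * B b y * C c z * v x y z)"

definition l1 :: "nat \<Rightarrow> nat \<Rightarrow> nat \<Rightarrow> nat" where "l1 d i1 i2 = i1 mod d"
definition l2 :: "nat \<Rightarrow> nat \<Rightarrow> nat \<Rightarrow> nat" where "l2 d i1 i2 = i2 mod d"
definition l3 :: "nat \<Rightarrow> nat \<Rightarrow> nat \<Rightarrow> nat" where
  "l3 d i1 i2 = nat ((- int i1 - int i2) mod int d)"

definition mbqc_output :: "nat \<Rightarrow> (nat \<Rightarrow> complex) \<Rightarrow> nat \<Rightarrow> nat \<Rightarrow> nat" where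
  "mbqc_output d \<theta> i1 i2 = (THE k. k < d \<and>
     (\<forall>a<d. \<forall>b<d. \<forall>c<d.
        tensor3_apply d (Mop d \<theta> (l1 d i1 i2)) (Mop d \<theta> (l2 d i1 i2)) (Mop d \<theta> (l3 d i1 i2))
          (psi d) a b c = omega d ^ k * psi d a b c))"

end

theory Submission
  imports Defs
begin

lemma omega_pow: "d > 0 \<Longrightarrow> omega d ^ k = cis (2 * pi * real k / real d)"
proof -
  assume "d > 0"
  have "omega d = cis (2 * pi / real d)"
    unfolding omega_def cis_conv_exp by (simp add: mult_ac)
  thus ?thesis by (simp add: DeMoivre mult_ac)
qed

lemma omega_d: "d > 0 \<Longrightarrow> omega d ^ d = 1"
  by (simp add: omega_pow)

lemma omega_mod: "d > 0 \<Longrightarrow> omega d ^ n = omega d ^ (n mod d)"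
proof -
  assume d: "d > 0"
  have "omega d ^ n = omega d ^ (n mod d + d * (n div d))" by simp
  also have "\<dots> = omega d ^ (n mod d)"
    by (simp only: power_add power_mult omega_d[OF d]) simp
  finally show ?thesis .
qed

lemma omega_dvd: "d > 0 \<Longrightarrow> d dvd n \<Longrightarrow> omega d ^ n = 1"
  by (subst omega_mod) auto

lemma omega_inj: "d > 0 \<Longrightarrow> inj_on (\<lambda>k. omega d ^ k) {..<d}"
  using bij_betw_roots_unity[of d] unfolding bij_betw_def
  by (simp add: omega_pow inj_on_def)

lemma omega_root: "d > 0 \<Longrightarrow> z ^ d = 1 \<Longrightarrow> \<exists>k<d. omega d ^ k = z"
proof -
  assume d: "d > 0" and z: "z ^ d = 1"
  have "z \<in> (\<lambda>k. cis (2 * pi * real k / real d)) ` {..<d}"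
    using bij_betw_roots_unity[OF d] z unfolding bij_betw_def by auto
  then obtain k where "k < d" "z = cis (2 * pi * real k / real d)" by auto
  thus ?thesis using omega_pow[OF d] by auto
qed

lemma mod_succ: "x < (d::nat) \<Longrightarrow> (x + 1) mod d = (if x + 1 = d then 0 else x + 1)"
  by auto

lemma mod_pred: "a < (d::nat) \<Longrightarrow> (a + d - 1) mod d = (if a = 0 then d - 1 else a - 1)"
proof (cases "a = 0")
  case True
  assume "a < d"
  thus ?thesis using True by simp
next
  case False
  assume "a < d"
  have "a + d - 1 = (a - 1) + d" using False by simp
  hence "(a + d - 1) mod d = (a - 1) mod d" by simp
  also have "\<dots> = a - 1" using \<open>a < d\<close> by simp
  finally show ?thesis using False by simp
qed

lemma key_idx: "x < (d::nat) \<Longrightarrow> a < d \<Longrightarrow> (a = (x + 1) mod d) = (x = (a + d - 1) mod d)"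
  using mod_succ[of x d] mod_pred[of a d] by (auto split: if_splits)

lemma tensor_eig:
  assumes d: "d > 1" and dv: "d dvd k1 + k2 + k3" and abc: "a < d" "b < d" "c < d"
  shows "tensor3_apply d (Mop d \<theta> k1) (Mop d \<theta> k2) (Mop d \<theta> k3) (psi d) a b c
         = \<theta> k1 * \<theta> k2 * \<theta> k3 * psi d a b c"
proof -
  define s where "s = complex_of_real (1 / sqrt (real d))"
  have psi: "psi d x y z = (if y = x then (if z = x then s else 0) else 0)" for x y z
    unfolding psi_def s_def by auto
  have step1: "tensor3_apply d (Mop d \<theta> k1) (Mop d \<theta> k2) (Mop d \<theta> k3) (psi d) a b c
     = (\<Sum>x<d. Mop d \<theta> k1 a x * Mop d \<theta> k2 b x * Mop d \<theta> k3 c x * s)"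
  proof -
    have inner: "(\<Sum>y<d. \<Sum>z<d. Mop d \<theta> k1 a x * Mop d \<theta> k2 b y * Mop d \<theta> k3 c z * psi d x y z)
        = Mop d \<theta> k1 a x * Mop d \<theta> k2 b x * Mop d \<theta> k3 c x * s" if x: "x < d" for x
    proof -
      have "(\<Sum>z<d. Mop d \<theta> k1 a x * Mop d \<theta> k2 b y * Mop d \<theta> k3 c z * psi d x y z)
          = (if y = x then Mop d \<theta> k1 a x * Mop d \<theta> k2 b x * Mop d \<theta> k3 c x * s else 0)" for y
      proof (cases "y = x")
        case True
        have "(\<Sum>z<d. Mop d \<theta> k1 a x * Mop d \<theta> k2 b y * Mop d \<theta> k3 c z * psi d x y z)
           = (\<Sum>z<d. if z = x then Mop d \<theta> k1 a x * Mop d \<theta> k2 b x * Mop d \<theta> k3 c x * s else 0)"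
          by (rule sum.cong) (auto simp: psi True)
        thus ?thesis using x True by simp
      qed (simp add: psi)
      hence "(\<Sum>y<d. \<Sum>z<d. Mop d \<theta> k1 a x * Mop d \<theta> k2 b y * Mop d \<theta> k3 c z * psi d x y z)
          = (\<Sum>y<d. if y = x then Mop d \<theta> k1 a x * Mop d \<theta> k2 b x * Mop d \<theta> k3 c x * s else 0)"
        by simp
      also have "\<dots> = Mop d \<theta> k1 a x * Mop d \<theta> k2 b x * Mop d \<theta> k3 c x * s"
        using x by simp
      finally show ?thesis .
    qed
    show ?thesis unfolding tensor3_apply_def by (rule sum.cong) (auto simp: inner)
  qed
  show ?thesis
  proof (cases "a = b \<and> b = c")
    case True
    define x0 where "x0 = (a + d - 1) mod d"
    have x0: "x0 < d" unfolding x0_def using d by simp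
    have "(\<Sum>x<d. Mop d \<theta> k1 a x * Mop d \<theta> k2 b x * Mop d \<theta> k3 c x * s)
        = (\<Sum>x<d. if x = x0 then \<theta> k1 * \<theta> k2 * \<theta> k3 * omega d ^ ((k1 + k2 + k3) * x ^ (d - 1)) * s else 0)"
    proof (rule sum.cong)
      fix x assume "x \<in> {..<d}"
      hence x: "x < d" by simp
      show "Mop d \<theta> k1 a x * Mop d \<theta> k2 b x * Mop d \<theta> k3 c x * s
         = (if x = x0 then \<theta> k1 * \<theta> k2 * \<theta> k3 * omega d ^ ((k1 + k2 + k3) * x ^ (d - 1)) * s else 0)"
        unfolding Mop_def using True key_idx[OF x abc(1)] unfolding x0_def[symmetric]
        by (simp add: power_add distrib_right mult_ac)
    qed simp
    also have "\<dots> = \<theta> k1 * \<theta> k2 * \<theta> k3 * s"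
    proof -
      obtain q where q: "k1 + k2 + k3 = d * q" using dv by blast
      have "omega d ^ ((k1 + k2 + k3) * x0 ^ (d - 1)) = 1"
        using d by (intro omega_dvd) (auto simp: q)
      thus ?thesis using x0 by simp
    qed
    finally show ?thesis using step1 True unfolding psi by simp
  next
    case False
    have "(\<Sum>x<d. Mop d \<theta> k1 a x * Mop d \<theta> k2 b x * Mop d \<theta> k3 c x * s) = 0"
      by (rule sum.neutral) (use False in \<open>auto simp: Mop_def\<close>)
    thus ?thesis using step1 False unfolding psi by auto
  qed
qed


lemma l3_props:
  assumes d: "d > 0"
  shows "l3 d x y < d" "d dvd x + y + l3 d x y"
proof -
  show "l3 d x y < d" unfolding l3_def using d by (simp add: nat_less_iff)
  have "int (x + y + l3 d x y) = (- int x - int y) mod int d - (- int x - int y)"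
    unfolding l3_def using d by simp
  also have "\<dots> = - (int d * ((- int x - int y) div int d))"
    using mult_div_mod_eq[of "int d" "- int x - int y"] by linarith
  finally have "int d dvd int (x + y + l3 d x y)" by simp
  thus "d dvd x + y + l3 d x y" by presburger
qed

lemma output_char:
  assumes d: "d > 1" and th: "\<And>l. l < d \<Longrightarrow> \<theta> l ^ d = omega d ^ l"
    and xy: "x < d" "y < d"
  shows "mbqc_output d \<theta> x y < d \<and>
         omega d ^ mbqc_output d \<theta> x y = \<theta> x * \<theta> y * \<theta> (l3 d x y)"
proof -
  have d0: "d > 0" using d by simp
  have L1: "l1 d x y = x" and L2: "l2 d x y = y" using xy by (simp_all add: l1_def l2_def)
  note L3 = l3_props[OF d0, of x y]
  define T where "T = \<theta> x * \<theta> y * \<theta> (l3 d x y)"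
  have "T ^ d = omega d ^ (x + y + l3 d x y)"
    unfolding T_def power_mult_distrib power_add using th xy L3(1) by simp
  also have "\<dots> = 1" using omega_dvd[OF d0 L3(2)] .
  finally obtain k0 where k0: "k0 < d" "omega d ^ k0 = T" using omega_root[OF d0] by blast
  have psi0: "psi d 0 0 0 \<noteq> 0" unfolding psi_def using d by simp
  have P: "(k < d \<and> (\<forall>a<d. \<forall>b<d. \<forall>c<d.
        tensor3_apply d (Mop d \<theta> (l1 d x y)) (Mop d \<theta> (l2 d x y)) (Mop d \<theta> (l3 d x y))
          (psi d) a b c = omega d ^ k * psi d a b c)) \<longleftrightarrow> k = k0" for k
  proof
    assume H: "k < d \<and> (\<forall>a<d. \<forall>b<d. \<forall>c<d.
        tensor3_apply d (Mop d \<theta> (l1 d x y)) (Mop d \<theta> (l2 d x y)) (Mop d \<theta> (l3 d x y))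
          (psi d) a b c = omega d ^ k * psi d a b c)"
    hence "T * psi d 0 0 0 = omega d ^ k * psi d 0 0 0"
      using tensor_eig[OF d, of x y "l3 d x y" 0 0 0 \<theta>] L3 d0 unfolding L1 L2 T_def by (simp; metis)
    hence "omega d ^ k = omega d ^ k0" using psi0 k0 by simp
    thus "k = k0" using omega_inj[OF d0] H k0 by (auto simp: inj_on_def)
  next
    assume "k = k0"
    thus "k < d \<and> (\<forall>a<d. \<forall>b<d. \<forall>c<d.
        tensor3_apply d (Mop d \<theta> (l1 d x y)) (Mop d \<theta> (l2 d x y)) (Mop d \<theta> (l3 d x y))
          (psi d) a b c = omega d ^ k * psi d a b c)"
      using tensor_eig[OF d, of x y "l3 d x y" _ _ _ \<theta>] L3 k0 unfolding L1 L2 T_def by simp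
  qed
  have "mbqc_output d \<theta> x y = k0"
    unfolding mbqc_output_def using P by (intro the_equality) blast+
  thus ?thesis using k0 T_def by simp
qed


lemma l3_inv:
  assumes d: "d > 0" and x: "x < d"
  shows "int x = (- int (l3 d x y) - int y) mod int d"
proof -
  have "int (l3 d x y) = (- int x - int y) mod int d" unfolding l3_def using d by simp
  hence "(- int (l3 d x y) - int y) mod int d = (- ((- int x - int y) mod int d) - int y) mod int d"
    by simp
  also have "\<dots> = ((- ((- int x - int y) mod int d)) mod int d - int y) mod int d"
    by (simp add: mod_diff_left_eq)
  also have "\<dots> = ((- (- int x - int y)) mod int d - int y) mod int d"
    by (simp add: mod_minus_eq)
  also have "\<dots> = (- (- int x - int y) - int y) mod int d"
    by (simp add: mod_diff_left_eq)
  also have "\<dots> = int x" using x by simp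
  finally show ?thesis by simp
qed

lemma l3_bij:
  assumes d: "d > 0"
  shows "bij_betw (\<lambda>x. l3 d x y) {..<d} {..<d}"
proof -
  have inj: "inj_on (\<lambda>x. l3 d x y) {..<d}"
  proof (rule inj_onI)
    fix x x' assume "x \<in> {..<d}" "x' \<in> {..<d}" "l3 d x y = l3 d x' y"
    thus "x = x'" using l3_inv[OF d, of x y] l3_inv[OF d, of x' y] by simp
  qed
  have "(\<lambda>x. l3 d x y) ` {..<d} = {..<d}"
    using l3_props(1)[OF d] inj by (intro endo_inj_surj) auto
  thus ?thesis using inj unfolding bij_betw_def by simp
qed

theorem theorem1:
  fixes d :: nat and \<theta> :: "nat \<Rightarrow> complex"
  assumes "prime d"
    and "\<And>l. l < d \<Longrightarrow> norm (\<theta> l) = 1 \<and> \<theta> l ^ d = omega d ^ l"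
  shows "\<not> (\<exists>m1 m2 m3 :: nat \<Rightarrow> nat. \<forall>i1<d. \<forall>i2<d.
            mbqc_output d \<theta> i1 i2 = (m1 (l1 d i1 i2) + m2 (l2 d i1 i2) + m3 (l3 d i1 i2)) mod d)"
proof
  assume "\<exists>m1 m2 m3 :: nat \<Rightarrow> nat. \<forall>i1<d. \<forall>i2<d.
            mbqc_output d \<theta> i1 i2 = (m1 (l1 d i1 i2) + m2 (l2 d i1 i2) + m3 (l3 d i1 i2)) mod d"
  then obtain m1 m2 m3 :: "nat \<Rightarrow> nat" where
    M: "\<And>i1 i2. i1 < d \<Longrightarrow> i2 < d \<Longrightarrow>
        mbqc_output d \<theta> i1 i2 = (m1 (l1 d i1 i2) + m2 (l2 d i1 i2) + m3 (l3 d i1 i2)) mod d"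
    by blast
  have d: "d > 1" using assms(1) prime_gt_1_nat by blast
  hence d0: "d > 0" by simp
  have th: "\<And>l. l < d \<Longrightarrow> \<theta> l ^ d = omega d ^ l" using assms(2) by blast
  define S where "S y = (\<Sum>x<d. mbqc_output d \<theta> x y)" for y
  define P where "P = (\<Prod>x<d. \<theta> x)"
  have A: "omega d ^ S y = P * \<theta> y ^ d * P" if y: "y < d" for y
  proof -
    have "omega d ^ S y = (\<Prod>x<d. omega d ^ mbqc_output d \<theta> x y)"
      unfolding S_def by (rule power_sum)
    also have "\<dots> = (\<Prod>x<d. \<theta> x * \<theta> y * \<theta> (l3 d x y))"
      using output_char[OF d th _ y] by (intro prod.cong) auto
    also have "\<dots> = P * \<theta> y ^ d * (\<Prod>x<d. \<theta> (l3 d x y))"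
      unfolding P_def by (simp add: prod.distrib)
    also have "(\<Prod>x<d. \<theta> (l3 d x y)) = P"
      unfolding P_def using prod.reindex_bij_betw[OF l3_bij[OF d0, of y], of \<theta>] by simp
    finally show ?thesis .
  qed
  have B: "S y mod d = (sum m1 {..<d} + sum m3 {..<d}) mod d" if y: "y < d" for y
  proof -
    have "S y mod d = (\<Sum>x<d. mbqc_output d \<theta> x y mod d) mod d"
      unfolding S_def by (simp add: mod_sum_eq)
    also have "\<dots> = (\<Sum>x<d. (m1 x + m2 y + m3 (l3 d x y)) mod d) mod d"
    proof -
      have "(\<Sum>x<d. mbqc_output d \<theta> x y mod d) = (\<Sum>x<d. (m1 x + m2 y + m3 (l3 d x y)) mod d)"
        by (rule sum.cong) (use M y in \<open>auto simp: l1_def l2_def\<close>)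
      thus ?thesis by simp
    qed
    also have "\<dots> = (\<Sum>x<d. m1 x + m2 y + m3 (l3 d x y)) mod d"
      by (simp add: mod_sum_eq)
    also have "(\<Sum>x<d. m1 x + m2 y + m3 (l3 d x y)) = sum m1 {..<d} + d * m2 y + (\<Sum>x<d. m3 (l3 d x y))"
      by (simp add: sum.distrib)
    also have "(\<Sum>x<d. m3 (l3 d x y)) = sum m3 {..<d}"
      using sum.reindex_bij_betw[OF l3_bij[OF d0, of y], of m3] by simp
    also have "sum m1 {..<d} + d * m2 y + sum m3 {..<d} = (sum m1 {..<d} + sum m3 {..<d}) + m2 y * d"
      by (simp add: algebra_simps)
    finally show ?thesis by simp
  qed
  have "omega d ^ S 1 = omega d ^ S 0"
    using B[of 0] B[of 1] d omega_mod[OF d0, of "S 0"] omega_mod[OF d0, of "S 1"] by simp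
  hence E: "P * omega d * P = P * 1 * P"
    using A[of 0] A[of 1] th[of 0] th[of 1] d by simp
  have "omega d \<noteq> 0" using omega_d[OF d0] d0 by (metis power_0_left zero_neq_one less_not_refl)
  hence "omega d ^ S 0 \<noteq> 0" by simp
  hence "P \<noteq> 0" using A[of 0] d by auto
  hence "omega d ^ 1 = omega d ^ 0" using E by simp
  thus False using omega_inj[OF d0] d unfolding inj_on_def by force
qed

end
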